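(* Let $D\ge 2$ be an integer and $n\ge 1$. Let $\mathcal{C}\subseteq(\mathbb{C}^D)^{\otimes n}$ be an $n$-qudit stabilizer code of dimension $K\ge 1$, with stabilizer $\mathcal{S}\subseteq\mathcal{P}_n$. Then $$K\cdot|\mathcal{S}| = D^n,$$ where $|\mathcal{S}|$ is the order of the group $\mathcal{S}$. In particular, $K$ is a divisor of $D^n$ (not necessarily a power of $D$ when $D$ is composite).
   Context: Fix an integer $D\ge2$, let $\omega=e^{2\pi i/D}$, and let all integer arithmetic be modulo $D$. On $\mathbb{C}^D$ with basis $\{|j\rangle\}_{j=0}^{D-1}$ define $Z=\sum_{j}\omega^j|j\rangle\langle j|$ and $X=\sum_j |j\rangle\langle j+1|$ (indices mod $D$), so $X^D=Z^D=I$ and $XZ=\omega ZX$. For $n$ qudits, a Pauli product is an operator $\omega^{\lambda}X_1^{x_1}Z_1^{z_1}\otimes\cdots\otimes X_n^{x_n}Z_n^{z_n}$ with $\lambda\in\mathbb{Z}_D$ and $\mathbf{x},\mathbf{z}\in\mathbb{Z}_D^n$; these form a group $\mathcal{P}_n$ (the generalized Pauli group) under multiplication. A stabilizer code is a subspace $\mathcal{C}$ of $(\mathbb{C}^D)^{\otimes n}$ of dimension $K\ge1$ such that: (C1) there is a subgroup $\mathcal{S}\le\mathcal{P}_n$ with $s|\psi\rangle=|\psi\rangle$ for all $s\in\mathcal{S}$ and all $|\psi\rangle\in\mathcal{C}$; (C2) $\mathcal{S}$ is maximal: every $s\in\mathcal{P}_n$ fixing every vector of $\mathcal{C}$ lies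 in $\mathcal{S}$; (C3) $\mathcal{C}$ is maximal: every vector fixed by all $s\in\mathcal{S}$ lies in $\mathcal{C}$. Then $\mathcal{S}$ is called the stabilizer of $\mathcal{C}$ (it is necessarily abelian). *)

theory Defs
  imports Complex_Main "HOL-Library.Function_Algebras" "HOL-Algebra.Group"
begin

text \<open>States of n qudits of dimension D: the computational basis is indexed by
  functions k :: nat => nat with k i < D for i < n and k i = 0 for i >= n.\<close>

definition basis_labels :: "nat \<Rightarrow> nat \<Rightarrow> (nat \<Rightarrow> nat) set" where
  "basis_labels D n = {k. (\<forall>i<n. k i < D) \<and> (\<forall>i\<ge>n. k i = 0)}"

definition qudit_space :: "nat \<Rightarrow> nat \<Rightarrow> ((nat \<Rightarrow> nat) \<Rightarrow> complex) set" where
  "qudit_space D n = {psi. \<forall>k. k \<notin> basis_labels D n \<longrightarrow> psi k = 0}"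

definition cscale :: "complex \<Rightarrow> ((nat \<Rightarrow> nat) \<Rightarrow> complex) \<Rightarrow> ((nat \<Rightarrow> nat) \<Rightarrow> complex)" where
  "cscale c psi = (\<lambda>k. c * psi k)"

definition omega :: "nat \<Rightarrow> complex" where
  "omega D = cis (2 * pi / real D)"

definition label_shift :: "nat \<Rightarrow> nat \<Rightarrow> (nat \<Rightarrow> nat) \<Rightarrow> (nat \<Rightarrow> nat) \<Rightarrow> (nat \<Rightarrow> nat)" where
  "label_shift D n k x = (\<lambda>i. if i < n then (k i + x i) mod D else 0)"

text \<open>The Pauli product omega^l X_1^{x_1} Z_1^{z_1} ... X_n^{x_n} Z_n^{z_n}, with
  Z|j> = omega^j |j> and X|j+1> = |j>; hence
  (X^x Z^z) |j> = omega^(z j) |j - x> and the amplitude of |k> in P psi is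
  omega^(l + sum_i z_i (k_i + x_i)) psi(k + x).\<close>
definition pauli_op :: "nat \<Rightarrow> nat \<Rightarrow> nat \<Rightarrow> (nat \<Rightarrow> nat) \<Rightarrow> (nat \<Rightarrow> nat)
    \<Rightarrow> ((nat \<Rightarrow> nat) \<Rightarrow> complex) \<Rightarrow> ((nat \<Rightarrow> nat) \<Rightarrow> complex)" where
  "pauli_op D n l x z psi = (\<lambda>k. if k \<in> basis_labels D n then
       omega D ^ (l + (\<Sum>i<n. z i * ((k i + x i) mod D))) * psi (label_shift D n k x)
     else 0)"

definition pauli_group :: "nat \<Rightarrow> nat \<Rightarrow>
    (((nat \<Rightarrow> nat) \<Rightarrow> complex) \<Rightarrow> ((nat \<Rightarrow> nat) \<Rightarrow> complex)) monoid" where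
  "pauli_group D n = \<lparr> carrier = {pauli_op D n l x z | l x z. True},
                       mult = (\<circ>),
                       one = pauli_op D n 0 (\<lambda>_. 0) (\<lambda>_. 0) \<rparr>"

definition is_stabilizer_code ::
  "nat \<Rightarrow> nat \<Rightarrow> ((nat \<Rightarrow> nat) \<Rightarrow> complex) set
     \<Rightarrow> (((nat \<Rightarrow> nat) \<Rightarrow> complex) \<Rightarrow> ((nat \<Rightarrow> nat) \<Rightarrow> complex)) set \<Rightarrow> bool" where
  "is_stabilizer_code D n C S \<longleftrightarrow>
     C \<subseteq> qudit_space D n \<and> module.subspace cscale C \<and>
     subgroup S (pauli_group D n) \<and>
     (\<forall>s\<in>S. \<forall>psi\<in>C. s psi = psi) \<and>
     (\<forall>s\<in>carrier (pauli_group D n). (\<forall>psi\<in>C. s psi = psi) \<longrightarrow> s \<in> S) \<and>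
     (\<forall>psi\<in>qudit_space D n. (\<forall>s\<in>S. s psi = psi) \<longrightarrow> psi \<in> C)"

end

theory Submission imports Defs "HOL-Number_Theory.Cong" begin

lemma omega_pow_eq_1:
  assumes "D > 0"
  shows "omega D ^ m = 1 \<longleftrightarrow> D dvd m"
proof
  assume h: "omega D ^ m = 1"
  have "cis (real m * (2 * pi / real D)) = 1" using h by (simp add: omega_def DeMoivre)
  then have "cos (real m * (2 * pi / real D)) = 1" by (simp add: complex_eq_iff)
  then obtain k :: int where k: "real m * (2 * pi / real D) = k * 2 * pi"
    by (auto simp: cos_one_2pi_int)
  then have "real m = real_of_int k * real D" using assms by (simp add: field_simps)
  then have "int m = k * int D" by (metis of_int_eq_iff of_int_mult of_int_of_nat_eq)
  then show "D dvd m" by (metis dvd_triv_right int_dvd_int_iff)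
next
  assume "D dvd m"
  then obtain q where q: "m = D * q" by auto
  have "real m * (2 * pi / real D) = 2 * pi * real q" using assms q by (simp add: field_simps)
  then show "omega D ^ m = 1" by (simp add: omega_def DeMoivre)
qed

lemma omega_pow_mod:
  assumes "D > 0"
  shows "omega D ^ m = omega D ^ (m mod D)"
proof -
  have "omega D ^ D = 1" using omega_pow_eq_1[OF assms] by simp
  have "omega D ^ m = (omega D ^ D) ^ (m div D) * omega D ^ (m mod D)"
    by (metis mult_div_mod_eq power_add power_mult)
  then show ?thesis using \<open>omega D ^ D = 1\<close> by simp
qed

lemma omega_pow_cong:
  assumes "D > 0" "a mod D = b mod D"
  shows "omega D ^ a = omega D ^ b"
  using omega_pow_mod[OF assms(1)] assms(2) by metis

lemma omega_nz: "omega D \<noteq> 0"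
  by (simp add: omega_def)

lemma sum_fun_apply: "(\<Sum>i\<in>I. f i) k = (\<Sum>i\<in>I. (f i) k)"
  by (induction I rule: infinite_finite_induct) auto

lemma bl_restrict_bij:
  "bij_betw (\<lambda>k. restrict k {..<n}) (basis_labels D n) (\<Pi>\<^sub>E i\<in>{..<n}. {..<D})"
proof (rule bij_betw_byWitness[where f' = "\<lambda>f i. if i < n then f i else 0"])
  show "\<forall>a\<in>basis_labels D n. (\<lambda>i. if i < n then restrict a {..<n} i else 0) = a"
    by (auto simp: basis_labels_def fun_eq_iff)
  show "\<forall>a'\<in>\<Pi>\<^sub>E i\<in>{..<n}. {..<D}. restrict (\<lambda>i. if i < n then a' i else 0) {..<n} = a'"
    by (auto simp: fun_eq_iff PiE_def extensional_def)
  show "(\<lambda>k. restrict k {..<n}) ` basis_labels D n \<subseteq> (\<Pi>\<^sub>E i\<in>{..<n}. {..<D})"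
    unfolding basis_labels_def by (intro image_subsetI) (simp add: restrict_PiE_iff)
  show "(\<lambda>f i. if i < n then f i else 0) ` (\<Pi>\<^sub>E i\<in>{..<n}. {..<D}) \<subseteq> basis_labels D n"
    by (auto simp: basis_labels_def PiE_def Pi_def)
qed

lemma card_bl: "card (basis_labels D n) = D ^ n"
  using bij_betw_same_card[OF bl_restrict_bij] by (simp add: card_PiE)

lemma finite_bl: "D > 0 \<Longrightarrow> finite (basis_labels D n)"
  using bij_betw_finite[OF bl_restrict_bij] by (simp add: finite_PiE)

lemma label_shift_bl: "D > 0 \<Longrightarrow> label_shift D n k x \<in> basis_labels D n"
  by (auto simp: label_shift_def basis_labels_def)

lemma pauli_in_V: "pauli_op D n l x z psi \<in> qudit_space D n"
  by (auto simp: pauli_op_def qudit_space_def)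

lemma pauli_add: "pauli_op D n l x z (psi + phi) = pauli_op D n l x z psi + pauli_op D n l x z phi"
  by (auto simp: pauli_op_def fun_eq_iff distrib_left)

lemma pauli_scale: "pauli_op D n l x z (cscale c psi) = cscale c (pauli_op D n l x z psi)"
  by (auto simp: pauli_op_def fun_eq_iff cscale_def)

lemma pauli_zero: "pauli_op D n l x z 0 = 0"
  by (auto simp: pauli_op_def fun_eq_iff)

lemma pauli_sum: "pauli_op D n l x z (\<Sum>i\<in>I. f i) = (\<Sum>i\<in>I. pauli_op D n l x z (f i))"
  by (auto simp: pauli_op_def fun_eq_iff sum_fun_apply sum_distrib_left)

interpretation cs: vector_space cscale
  by unfold_locales (auto simp: cscale_def fun_eq_iff algebra_simps)

lemma pauli_norm:
  assumes "D > 0"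
  shows "pauli_op D n l x z = pauli_op D n (l mod D) (\<lambda>i. if i<n then x i mod D else 0)
            (\<lambda>i. if i<n then z i mod D else 0)"
proof (intro ext)
  fix psi k
  have ls: "label_shift D n k (\<lambda>i. if i<n then x i mod D else 0) = label_shift D n k x"
    by (auto simp: label_shift_def fun_eq_iff mod_simps)
  have s1: "(\<Sum>i<n. (if i<n then z i mod D else 0) * ((k i + (if i<n then x i mod D else 0)) mod D))
      = (\<Sum>i<n. (z i mod D) * ((k i + x i mod D) mod D))"
    by (intro sum.cong) auto
  have m: "(l + (\<Sum>i<n. z i * ((k i + x i) mod D))) mod D =
     (l mod D + (\<Sum>i<n. (if i<n then z i mod D else 0) * ((k i + (if i<n then x i mod D else 0)) mod D))) mod D"
  proof -
    have a: "(\<Sum>i<n. z i * ((k i + x i) mod D)) mod D = (\<Sum>i<n. (z i mod D) * ((k i + x i) mod D)) mod D"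
      by (subst (1 2) mod_sum_eq[symmetric]) (simp add: mod_mult_left_eq)
    show ?thesis unfolding s1
      by (simp add: mod_simps) (rule mod_add_cong[OF refl a])
  qed
  have "omega D ^ (l + (\<Sum>i<n. z i * ((k i + x i) mod D))) =
     omega D ^ (l mod D + (\<Sum>i<n. (if i<n then z i mod D else 0) * ((k i + (if i<n then x i mod D else 0)) mod D)))"
    by (rule omega_pow_cong[OF assms m])
  then show "pauli_op D n l x z psi k = pauli_op D n (l mod D) (\<lambda>i. if i<n then x i mod D else 0)
            (\<lambda>i. if i<n then z i mod D else 0) psi k"
    unfolding pauli_op_def ls by simp
qed

lemma finite_carrier:
  assumes "D > 0"
  shows "finite (carrier (pauli_group D n))"
proof -
  have "carrier (pauli_group D n) \<subseteq>
     (\<lambda>(l,x,z). pauli_op D n l x z) ` ({..<D} \<times> basis_labels D n \<times> basis_labels D n)"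
  proof
    fix s assume "s \<in> carrier (pauli_group D n)"
    then obtain l x z where s: "s = pauli_op D n l x z" by (auto simp: pauli_group_def)
    show "s \<in> (\<lambda>(l,x,z). pauli_op D n l x z) ` ({..<D} \<times> basis_labels D n \<times> basis_labels D n)"
    proof (rule image_eqI[where x = "(l mod D, (\<lambda>i. if i<n then x i mod D else 0),
            (\<lambda>i. if i<n then z i mod D else 0))"])
      show "s = (\<lambda>(l,x,z). pauli_op D n l x z) (l mod D, (\<lambda>i. if i<n then x i mod D else 0),
            (\<lambda>i. if i<n then z i mod D else 0))"
        unfolding s split by (rule pauli_norm[OF assms])
      show "(l mod D, (\<lambda>i. if i<n then x i mod D else 0),
            (\<lambda>i. if i<n then z i mod D else 0)) \<in> {..<D} \<times> basis_labels D n \<times> basis_labels D n"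
        using assms by (simp add: basis_labels_def)
    qed
  qed
  moreover have "finite ({..<D} \<times> basis_labels D n \<times> basis_labels D n)"
    using finite_bl[OF assms] by auto
  ultimately show ?thesis by (rule finite_surj[rotated])
qed

lemma mod_back:
  fixes a b D :: nat
  assumes "D > 0" "a < D"
  shows "((a + D - b mod D) mod D + b) mod D = a"
proof -
  have bl: "b mod D < D" using assms(1) by simp
  have e1: "b mod D + D * (b div D) = b" by (rule mod_mult_div_eq)
  have "a + D - b mod D + b = (a + D) + D * (b div D)"
    using bl e1 by linarith
  then have "(a + D - b mod D + b) mod D = a mod D" by simp
  then show ?thesis using assms(2) by (simp only: mod_add_left_eq mod_less)
qed

lemma shift_back:
  assumes "D > 0" "k \<in> basis_labels D n"
  shows "label_shift D n (label_shift D n k (\<lambda>i. D - x i mod D)) x = k"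
  using assms by (auto simp: label_shift_def basis_labels_def fun_eq_iff mod_back)

lemma pauli_inj:
  assumes "D > 0" "psi \<in> qudit_space D n" "phi \<in> qudit_space D n"
    and eq: "pauli_op D n l x z psi = pauli_op D n l x z phi"
  shows "psi = phi"
proof
  fix k
  show "psi k = phi k"
  proof (cases "k \<in> basis_labels D n")
    case True
    define k' where "k' = label_shift D n k (\<lambda>i. D - x i mod D)"
    have k'bl: "k' \<in> basis_labels D n" using label_shift_bl[OF assms(1)] k'_def by simp
    have "label_shift D n k' x = k" using shift_back[OF assms(1) True] k'_def by simp
    then have "pauli_op D n l x z psi k' = omega D ^ (l + (\<Sum>i<n. z i * ((k' i + x i) mod D))) * psi k"
       "pauli_op D n l x z phi k' = omega D ^ (l + (\<Sum>i<n. z i * ((k' i + x i) mod D))) * phi k"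
      using k'bl by (auto simp: pauli_op_def)
    then show ?thesis using eq omega_nz by (simp add: fun_eq_iff)
  next
    case False
    then show ?thesis using assms(2,3) by (auto simp: qudit_space_def)
  qed
qed

definition delta :: "(nat \<Rightarrow> nat) \<Rightarrow> (nat \<Rightarrow> nat) \<Rightarrow> complex" where
  "delta k0 = (\<lambda>k. if k = k0 then 1 else 0)"

definition tr :: "nat \<Rightarrow> nat \<Rightarrow> (((nat \<Rightarrow> nat) \<Rightarrow> complex) \<Rightarrow> ((nat \<Rightarrow> nat) \<Rightarrow> complex)) \<Rightarrow> complex" where
  "tr D n T = (\<Sum>k\<in>basis_labels D n. T (delta k) k)"

lemma mod_cancel_nat:
  fixes a b c D :: nat
  assumes "(a + b) mod D = (a + c) mod D"
  shows "b mod D = c mod D"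
  using assms cong_add_lcancel_nat[of a b c D] unfolding cong_def by simp

lemma trace_x:
  assumes "D > 0" "i < n" "x i mod D \<noteq> 0"
  shows "tr D n (pauli_op D n l x z) = 0"
  unfolding tr_def
proof (rule sum.neutral, intro ballI)
  fix k assume k: "k \<in> basis_labels D n"
  have "label_shift D n k x \<noteq> k"
  proof
    assume "label_shift D n k x = k"
    then have "(k i + x i) mod D = k i" using assms(2) by (auto simp: label_shift_def fun_eq_iff split: if_splits)
    then have "(k i + x i) mod D = (k i + 0) mod D" using k assms(2) by (simp add: basis_labels_def)
    then have "x i mod D = 0 mod D" by (rule mod_cancel_nat)
    then show False using assms(3) by simp
  qed
  then show "pauli_op D n l x z (delta k) k = 0" by (simp add: pauli_op_def delta_def)
qed

lemma shift_trivial: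
  assumes "D > 0" "\<forall>i<n. x i mod D = 0" "k \<in> basis_labels D n" "i < n"
  shows "(k i + x i) mod D = k i"
proof -
  have "(k i + x i) mod D = (k i + x i mod D) mod D" by (simp add: mod_add_right_eq)
  also have "\<dots> = k i" using assms by (simp add: basis_labels_def)
  finally show ?thesis .
qed

lemma label_shift_trivial:
  assumes "D > 0" "\<forall>i<n. x i mod D = 0" "k \<in> basis_labels D n"
  shows "label_shift D n k x = k"
  using assms shift_trivial[OF assms] by (auto simp: label_shift_def fun_eq_iff basis_labels_def)

lemma trace_z:
  assumes "D > 0" "\<forall>i<n. x i mod D = 0" "j < n" "z j mod D \<noteq> 0"
  shows "tr D n (pauli_op D n l x z) = 0"
proof -
  define f where "f k = omega D ^ (l + (\<Sum>i<n. z i * k i))" for k :: "nat \<Rightarrow> nat"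
  let ?B = "basis_labels D n"
  have "tr D n (pauli_op D n l x z) = (\<Sum>k\<in>?B. f k)"
    unfolding tr_def
  proof (rule sum.cong[OF refl])
    fix k assume k: "k \<in> ?B"
    have "(\<Sum>i<n. z i * ((k i + x i) mod D)) = (\<Sum>i<n. z i * k i)"
      using shift_trivial[OF assms(1,2) k] by (intro sum.cong) auto
    then show "pauli_op D n l x z (delta k) k = f k"
      using k label_shift_trivial[OF assms(1,2) k] by (simp add: pauli_op_def delta_def f_def)
  qed
  define sig where "sig k = k(j := (k j + 1) mod D)" for k :: "nat \<Rightarrow> nat"
  have sigB: "sig ` ?B \<subseteq> ?B" using assms(1,3) by (auto simp: sig_def basis_labels_def)
  have inj: "inj_on sig ?B"
  proof (rule inj_onI)
    fix k k' assume k: "k \<in> ?B" and k': "k' \<in> ?B" and e: "sig k = sig k'"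
    then have "(k j + 1) mod D = (k' j + 1) mod D" unfolding sig_def by (metis fun_upd_same)
    then have "(1 + k j) mod D = (1 + k' j) mod D" by (simp add: add.commute)
    then have "k j mod D = k' j mod D" by (rule mod_cancel_nat)
    then have "k j = k' j" using k k' assms(3) by (simp add: basis_labels_def)
    moreover have "\<forall>i. i \<noteq> j \<longrightarrow> k i = k' i" using e unfolding sig_def by (metis fun_upd_other)
    ultimately show "k = k'" by auto
  qed
  have img: "sig ` ?B = ?B" by (rule endo_inj_surj[OF finite_bl[OF assms(1)] sigB inj])
  have fsig: "f (sig k) = omega D ^ z j * f k" if k: "k \<in> ?B" for k
  proof -
    have r1: "(\<Sum>i<n. z i * sig k i) = z j * ((k j + 1) mod D) + (\<Sum>i\<in>{..<n}-{j}. z i * k i)"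
    proof -
      have "(\<Sum>i<n. z i * sig k i) = z j * sig k j + (\<Sum>i\<in>{..<n}-{j}. z i * sig k i)"
        using assms(3) by (simp add: sum.remove)
      also have "(\<Sum>i\<in>{..<n}-{j}. z i * sig k i) = (\<Sum>i\<in>{..<n}-{j}. z i * k i)"
        by (intro sum.cong) (auto simp: sig_def)
      finally show ?thesis by (simp add: sig_def)
    qed
    have r2: "(\<Sum>i<n. z i * k i) = z j * k j + (\<Sum>i\<in>{..<n}-{j}. z i * k i)"
      using assms(3) by (simp add: sum.remove)
    have m: "(l + (\<Sum>i<n. z i * sig k i)) mod D = (z j + (l + (\<Sum>i<n. z i * k i))) mod D"
    proof -
      have hA: "(z j * ((k j + 1) mod D)) mod D = (z j + z j * k j) mod D"
        by (simp add: mod_mult_right_eq algebra_simps)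
      have "(l + (z j * ((k j + 1) mod D) + (\<Sum>i\<in>{..<n}-{j}. z i * k i))) mod D
          = (l + ((z j + z j * k j) + (\<Sum>i\<in>{..<n}-{j}. z i * k i))) mod D"
        by (rule mod_add_cong[OF refl mod_add_cong[OF hA refl]])
      then show ?thesis unfolding r1 r2 by (simp add: algebra_simps)
    qed
    show ?thesis unfolding f_def using omega_pow_cong[OF assms(1) m] by (simp add: power_add)
  qed
  have "(\<Sum>k\<in>?B. f k) = (\<Sum>k\<in>sig ` ?B. f k)" using img by simp
  also have "\<dots> = (\<Sum>k\<in>?B. f (sig k))" by (rule sum.reindex[OF inj, unfolded comp_def])
  also have "\<dots> = omega D ^ z j * (\<Sum>k\<in>?B. f k)" using fsig by (simp add: sum_distrib_left)
  finally have eq: "(\<Sum>k\<in>?B. f k) = omega D ^ z j * (\<Sum>k\<in>?B. f k)" .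
  have "omega D ^ z j \<noteq> 1" using omega_pow_eq_1[OF assms(1)] assms(4) by (simp add: dvd_eq_mod_eq_0)
  then have "(\<Sum>k\<in>?B. f k) = 0" using eq by (metis mult_cancel_right2)
  then show ?thesis using \<open>tr D n (pauli_op D n l x z) = (\<Sum>k\<in>?B. f k)\<close> by simp
qed

lemma pauli_scalar:
  assumes "D > 0" "\<forall>i<n. x i mod D = 0" "\<forall>i<n. z i mod D = 0"
  shows "pauli_op D n l x z psi = (\<lambda>k. if k \<in> basis_labels D n then omega D ^ l * psi k else 0)"
proof
  fix k
  show "pauli_op D n l x z psi k = (if k \<in> basis_labels D n then omega D ^ l * psi k else 0)"
  proof (cases "k \<in> basis_labels D n")
    case True
    have t: "(z i * ((k i + x i) mod D)) mod D = 0" if "i < n" for i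
    proof -
      have "(z i * ((k i + x i) mod D)) mod D = ((z i mod D) * ((k i + x i) mod D)) mod D"
        by (simp add: mod_mult_left_eq)
      then show ?thesis using assms(3) that by simp
    qed
    have "(\<Sum>i<n. z i * ((k i + x i) mod D)) mod D = (\<Sum>i<n. (z i * ((k i + x i) mod D)) mod D) mod D"
      by (simp add: mod_sum_eq)
    also have "\<dots> = 0" using t by simp
    finally have "(l + (\<Sum>i<n. z i * ((k i + x i) mod D))) mod D = l mod D"
      by (metis add.right_neutral mod_add_right_eq)
    then have "omega D ^ (l + (\<Sum>i<n. z i * ((k i + x i) mod D))) = omega D ^ l"
      by (rule omega_pow_cong[OF assms(1)])
    then show ?thesis using True label_shift_trivial[OF assms(1,2) True] by (simp add: pauli_op_def)
  next
    case False
    then show ?thesis by (simp add: pauli_op_def)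
  qed
qed

lemma trace_id:
  assumes "D > 0"
  shows "tr D n (pauli_op D n 0 (\<lambda>_. 0) (\<lambda>_. 0)) = of_nat (D ^ n)"
proof -
  have "tr D n (pauli_op D n 0 (\<lambda>_. 0) (\<lambda>_. 0)) = (\<Sum>k\<in>basis_labels D n. 1)"
    unfolding tr_def using pauli_scalar[OF assms, of n "\<lambda>_. 0" "\<lambda>_. 0" 0]
    by (intro sum.cong) (auto simp: delta_def)
  then show ?thesis by (simp add: card_bl)
qed

lemma pauli_lin_sum:
  "pauli_op D n l x z (\<Sum>k\<in>A. cscale (c k) (f k)) = (\<Sum>k\<in>A. cscale (c k) (pauli_op D n l x z (f k)))"
  by (simp add: pauli_sum pauli_scale)

lemma expand_V:
  assumes "D > 0" "b \<in> qudit_space D n"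
  shows "(\<Sum>k\<in>basis_labels D n. cscale (b k) (delta k)) = b"
proof
  fix q
  have "(\<Sum>k\<in>basis_labels D n. cscale (b k) (delta k)) q = (\<Sum>k\<in>basis_labels D n. if k = q then b q else 0)"
    unfolding sum_fun_apply by (intro sum.cong) (auto simp: cscale_def delta_def)
  also have "\<dots> = b q" using assms(2) by (auto simp: qudit_space_def finite_bl[OF assms(1)])
  finally show "(\<Sum>k\<in>basis_labels D n. cscale (b k) (delta k)) q = b q" .
qed

lemma delta_V: "k \<in> basis_labels D n \<Longrightarrow> delta k \<in> qudit_space D n"
  by (auto simp: delta_def qudit_space_def)

theorem theorem1:
  fixes D n K :: nat
    and C :: "((nat \<Rightarrow> nat) \<Rightarrow> complex) set"
    and S :: "(((nat \<Rightarrow> nat) \<Rightarrow> complex) \<Rightarrow> ((nat \<Rightarrow> nat) \<Rightarrow> complex)) set"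
  assumes "D \<ge> 2" and "n \<ge> 1"
    and "is_stabilizer_code D n C S"
    and "vector_space.dim cscale C = K" and "K \<ge> 1"
  shows "K * card S = D ^ n"
proof -
  have D0: "D > 0" using assms(1) by simp
  let ?V = "qudit_space D n" and ?B = "basis_labels D n" and ?G = "pauli_group D n"
  have CV: "C \<subseteq> ?V" and sub: "cs.subspace C" and SG: "subgroup S ?G"
    and fixC: "\<forall>s\<in>S. \<forall>psi\<in>C. s psi = psi"
    and C3: "\<forall>psi\<in>?V. (\<forall>s\<in>S. s psi = psi) \<longrightarrow> psi \<in> C"
    using assms(3) unfolding is_stabilizer_code_def by auto
  have SsubG: "S \<subseteq> carrier ?G" using SG by (rule subgroup.subset)
  have pauliS: "\<exists>l x z. s = pauli_op D n l x z" if "s \<in> S" for s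
    using that SsubG by (auto simp: pauli_group_def)
  have finS: "finite S" using finite_subset[OF SsubG finite_carrier[OF D0]] .
  define one where "one = pauli_op D n 0 (\<lambda>_. 0) (\<lambda>_. 0)"
  have oneS: "one \<in> S" using subgroup.one_closed[OF SG] by (simp add: pauli_group_def one_def)
  have compS: "t \<circ> s \<in> S" if "t \<in> S" "s \<in> S" for s t
    using subgroup.m_closed[OF SG that] by (simp add: pauli_group_def)
  define N where "N = card S"
  have N0: "N > 0" using finS oneS N_def card_gt_0_iff by blast
  obtain Bs where BsC: "Bs \<subseteq> C" and indep: "cs.independent Bs" and Cspan: "C \<subseteq> cs.span Bs"
    and cardBs: "card Bs = cs.dim C"
    using cs.basis_exists[of C] by blast
  have "\<not> C \<subseteq> {0}"
  proof
    assume "C \<subseteq> {0}"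
    then have "Bs \<subseteq> {0}" using BsC by auto
    moreover have "0 \<notin> Bs" using indep cs.dependent_zero by blast
    ultimately have "Bs = {}" by auto
    then show False using cardBs assms(4,5) by simp
  qed
  then obtain psi0 where psi0C: "psi0 \<in> C" and psi0nz: "psi0 \<noteq> 0" by auto
  then obtain k0 where k0: "psi0 k0 \<noteq> 0" by (auto simp: fun_eq_iff)
  have k0B: "k0 \<in> ?B" using k0 psi0C CV by (auto simp: qudit_space_def)
  have trS: "tr D n s = 0" if sS: "s \<in> S" and sne: "s \<noteq> one" for s
  proof -
    obtain l x z where s: "s = pauli_op D n l x z" using pauliS[OF sS] by auto
    show ?thesis
    proof (cases "\<exists>i<n. x i mod D \<noteq> 0")
      case True
      then show ?thesis using trace_x[OF D0] s by auto
    next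
      case Fx: False
      show ?thesis
      proof (cases "\<exists>j<n. z j mod D \<noteq> 0")
        case True
        then show ?thesis using trace_z[OF D0] Fx s by auto
      next
        case Fz: False
        have sc: "s psi = (\<lambda>k. if k \<in> ?B then omega D ^ l * psi k else 0)" for psi
          using pauli_scalar[OF D0] Fx Fz s by auto
        have "s psi0 = psi0" using fixC sS psi0C by auto
        then have "omega D ^ l * psi0 k0 = psi0 k0" using sc[of psi0] k0B by (metis)
        then have l1: "omega D ^ l = 1" using k0 by simp
        have "s = one"
        proof
          fix psi
          show "s psi = one psi" unfolding one_def sc
            using pauli_scalar[OF D0, of n "\<lambda>_. 0" "\<lambda>_. 0" 0 psi] l1 by (simp add: fun_eq_iff)
        qed
        then show ?thesis using sne by simp
      qed
    qed
  qed
  have sumtr: "(\<Sum>s\<in>S. tr D n s) = of_nat (D ^ n)"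
  proof -
    have "(\<Sum>s\<in>S. tr D n s) = tr D n one + (\<Sum>s\<in>S - {one}. tr D n s)"
      using finS oneS by (simp add: sum.remove)
    also have "(\<Sum>s\<in>S - {one}. tr D n s) = 0" using trS by (intro sum.neutral) auto
    finally show ?thesis using trace_id[OF D0] one_def by simp
  qed
  define P where "P psi = cscale (1 / of_nat N) (\<Sum>s\<in>S. s psi)" for psi
  have Papp: "P psi k = (1 / of_nat N) * (\<Sum>s\<in>S. s psi k)" for psi k
    by (simp add: P_def cscale_def sum_fun_apply)
  have PV: "P psi \<in> ?V" for psi
  proof -
    have "s psi k = 0" if "s \<in> S" "k \<notin> ?B" for s k
      using pauliS[OF that(1)] pauli_in_V that(2) unfolding qudit_space_def by blast
    then show ?thesis unfolding qudit_space_def by (auto simp: Papp intro!: sum.neutral)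
  qed
  have PC: "P psi \<in> C" for psi
  proof -
    have "t (P psi) = P psi" if tS: "t \<in> S" for t
    proof -
      obtain l x z where t: "t = pauli_op D n l x z" using pauliS[OF tS] by auto
      have inj: "inj_on (\<lambda>s. t \<circ> s) S"
      proof (rule inj_onI)
        fix s s' assume sS: "s \<in> S" and s'S: "s' \<in> S" and e: "t \<circ> s = t \<circ> s'"
        show "s = s'"
        proof
          fix phi
          have "t (s phi) = t (s' phi)" using e by (metis comp_apply)
          moreover have "s phi \<in> ?V" "s' phi \<in> ?V"
            using pauliS[OF sS] pauliS[OF s'S] pauli_in_V by blast+
          ultimately show "s phi = s' phi" using pauli_inj[OF D0] t by blast
        qed
      qed
      have img: "(\<lambda>s. t \<circ> s) ` S = S"
        by (rule endo_inj_surj[OF finS _ inj]) (auto intro: compS[OF tS])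
      have "t (\<Sum>s\<in>S. s psi) = (\<Sum>s\<in>S. t (s psi))" using t by (simp add: pauli_sum)
      also have "\<dots> = (\<Sum>s\<in>S. (t \<circ> s) psi)" by simp
      also have "\<dots> = (\<Sum>s\<in>(\<lambda>s. t \<circ> s) ` S. s psi)"
        using sum.reindex[OF inj, of "\<lambda>s. s psi"] by (simp add: o_def)
      also have "\<dots> = (\<Sum>s\<in>S. s psi)" using img by simp
      finally have "t (\<Sum>s\<in>S. s psi) = (\<Sum>s\<in>S. s psi)" .
      then show ?thesis unfolding P_def using t by (simp add: pauli_scale)
    qed
    then show ?thesis using C3 PV by blast
  qed
  have Pfix: "P psi = psi" if "psi \<in> C" for psi
  proof
    fix k
    have "P psi k = (1 / of_nat N) * (\<Sum>s\<in>S. psi k)" unfolding Papp using fixC that by simp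
    also have "\<dots> = psi k" using N0 N_def by simp
    finally show "P psi k = psi k" .
  qed
  have Plin: "P (\<Sum>k\<in>A. cscale (c k) (f k)) = (\<Sum>k\<in>A. cscale (c k) (P (f k)))" for A c f
  proof
    fix q
    have "P (\<Sum>k\<in>A. cscale (c k) (f k)) q = (1 / of_nat N) * (\<Sum>s\<in>S. \<Sum>k\<in>A. c k * s (f k) q)"
      unfolding Papp
    proof (intro arg_cong[where f = "\<lambda>x. (1 / of_nat N) * x"] sum.cong refl)
      fix s assume "s \<in> S"
      then obtain l x z where s: "s = pauli_op D n l x z" using pauliS by blast
      show "s (\<Sum>k\<in>A. cscale (c k) (f k)) q = (\<Sum>k\<in>A. c k * s (f k) q)"
        unfolding s pauli_lin_sum by (simp add: sum_fun_apply cscale_def)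
    qed
    also have "\<dots> = (\<Sum>k\<in>A. c k * ((1 / of_nat N) * (\<Sum>s\<in>S. s (f k) q)))"
      by (simp add: sum_distrib_left sum.swap[of _ S] mult_ac)
    also have "\<dots> = (\<Sum>k\<in>A. cscale (c k) (P (f k))) q"
      by (simp add: sum_fun_apply cscale_def Papp)
    finally show "P (\<Sum>k\<in>A. cscale (c k) (f k)) q = (\<Sum>k\<in>A. cscale (c k) (P (f k))) q" .
  qed
  \<comment> \<open>trace of P computed via the group\<close>
  have trP1: "(\<Sum>k\<in>?B. P (delta k) k) = of_nat (D ^ n) / of_nat N"
  proof -
    have "(\<Sum>k\<in>?B. P (delta k) k) = (1 / of_nat N) * (\<Sum>s\<in>S. tr D n s)"
      unfolding Papp tr_def by (simp add: sum_distrib_left sum.swap[of _ S])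
    then show ?thesis using sumtr by simp
  qed
  \<comment> \<open>trace of P computed via a basis of C\<close>
  have finBs: "finite Bs" using cardBs assms(4,5) by (metis card.infinite not_one_le_zero)
  have spanC: "cs.span Bs = C" using cs.span_minimal[OF BsC sub] Cspan by auto
  let ?r = "cs.representation Bs"
  have Pd_span: "P (delta k) \<in> cs.span Bs" for k using PC spanC by auto
  have trP2: "(\<Sum>k\<in>?B. P (delta k) k) = of_nat K"
  proof -
    have rep: "P (delta k) = (\<Sum>b\<in>Bs. cscale (?r (P (delta k)) b) b)" for k
      using cs.sum_representation_eq[OF indep Pd_span finBs subset_refl] by simp
    have "(\<Sum>k\<in>?B. P (delta k) k) = (\<Sum>k\<in>?B. \<Sum>b\<in>Bs. ?r (P (delta k)) b * b k)"
      by (intro sum.cong refl) (subst rep, simp add: sum_fun_apply cscale_def)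
    also have "\<dots> = (\<Sum>b\<in>Bs. \<Sum>k\<in>?B. b k * ?r (P (delta k)) b)"
      by (simp add: sum.swap[of _ Bs] mult_ac)
    also have "\<dots> = (\<Sum>b\<in>Bs. 1)"
    proof (intro sum.cong refl)
      fix b assume bB: "b \<in> Bs"
      have bV: "b \<in> ?V" using bB BsC CV by auto
      have "(\<Sum>k\<in>?B. b k * ?r (P (delta k)) b) = ?r (\<Sum>k\<in>?B. cscale (b k) (P (delta k))) b"
        using cs.representation_sum[OF indep, of ?B "\<lambda>k. cscale (b k) (P (delta k))"]
          cs.representation_scale[OF indep Pd_span] cs.span_scale[OF Pd_span]
        by simp
      also have "(\<Sum>k\<in>?B. cscale (b k) (P (delta k))) = P b"
        using Plin[of "b" "delta" ?B] expand_V[OF D0 bV] by simp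
      also have "P b = b" using Pfix bB BsC by auto
      also have "?r b b = 1" using cs.representation_basis[OF indep bB] by simp
      finally show "(\<Sum>k\<in>?B. b k * ?r (P (delta k)) b) = 1" .
    qed
    also have "\<dots> = of_nat K" using cardBs assms(4) by simp
    finally show ?thesis .
  qed
  have "(of_nat K :: complex) = of_nat (D ^ n) / of_nat N" using trP1 trP2 by simp
  then have "(of_nat K :: complex) * of_nat N = of_nat (D ^ n)" using N0 by (simp add: field_simps)
  then have "of_nat (K * N) = (of_nat (D ^ n) :: complex)" by simp
  then show ?thesis unfolding N_def using of_nat_eq_iff by blast
qed

end
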